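(* Let $P$ be a quasi-lattice ordered subsemigroup of a discrete group $Q$ and let $(X,P,T)$ be a directed locally compact semigroup action. Let $\Lambda=X*P$ be the topological $P$-graph of the action, with path space $\Omega$, boundary path space $\partial\Omega$ and shift $T$. Then there is a homeomorphism $J:X\to\partial\Omega$ which is $P$-equivariant (for all $(x,m)\in X*P$, $J(x)\cdot m\neq\emptyset$ and $J(x\cdot m)=J(x)\cdot m$) and which implements a groupoid isomorphism $(x,q,y)\mapsto(J(x),q,J(y))$ of $G(X,P,T)$ onto $G(\partial\Omega,P,T)$.
   Context: Partial action: $X*P\subset X\times P$, $(x,m)\mapsto x\cdot m$, $x\cdot e=x$, $(x,mn)\in X*P$ iff $(x,m),(x\cdot m,n)\in X*P$, then $(x\cdot m)\cdot n=x\cdot(mn)$; $U(m)=\{x:(x,m)\in X*P\}$, $m\le n$ iff $n=mp$. Directed: $U(m)\cap U(n)\neq\emptyset$ implies there is $r\ge m,n$ with $U(m)\cap U(n)=U(r)$. Locally compact: $X$ locally compact Hausdorff, $U(m),V(m)=\{x\cdot m\}$ open, $x\mapsto x\cdot m$ a local homeomorphism $U(m)\to V(m)$. Quasi-lattice ordered: $P\cap P^{-1}=\{e\}$ and two elements with a common upper bound have a least upper bound. The graph of the action is $\Lambda=X*P$ (topology from $X\times P$) with $\Lambda^{(0)}=X$, $r(x,n)=x$, $s(x,n)=x\cdot n$, $d(x,n)=n$, $(x,m)(x\cdot m,n)=(x,mn)$. For $\mu,\lambda\in\Lambda$, $\mu\le\lambda$ iff $\lambda=\mu\nu$. $\Omega$: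 nonempty closed hereditary (closed under $\le$-predecessors) directed (any two elements have a common upper bound inside) subsets of $\Lambda$, with the relative Fell topology; $A\cdot n=\{\nu:\exists\mu\in\Lambda^n,\mu\nu\in A\}$ where $\Lambda^n=d^{-1}(n)$. $E\subset\Lambda$ exhaustive: for each $\lambda$ with $r(\lambda)\in r(E)$ there is $\mu\in E$ such that $\lambda,\mu$ have a common upper bound; $\lambda\in A$ extendable in $A$: for every compact exhaustive $E$ with $r(E)$ a neighborhood of $s(\lambda)$ some $\mu\in E$ has $\lambda\mu\in A$; $\partial\Omega$: those $A\in\Omega$ all of whose elements are extendable in $A$. For a partial action $(Y,P,S)$ (here $Y=X$ or $Y=\partial\Omega$ with $A\mapsto A\cdot n$ defined when $A\cdot n\ne\emptyset$), $G(Y,P,S)=\{(x,q,y)\in Y\times Q\times Y:\exists m,n,\ q=mn^{-1},\ x\in U(m), y\in U(n), x\cdot m=y\cdot n\}$ with $(x,q,y)(y,q',z)=(x,qq',z)$, $(x,q,y)^{-1}=(y,q^{-1},x)$ and topology with basis $Z(U,m,n,V)=\{(x,mn^{-1},y):x\in U,y\in V,x\cdot m=y\cdot n\}$. *)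

theory Defs
  imports "HOL-Analysis.Analysis" "HOL-Algebra.Group"
begin

definition sg_le :: "('q, 'b) monoid_scheme \<Rightarrow> 'q set \<Rightarrow> 'q \<Rightarrow> 'q \<Rightarrow> bool" where
  "sg_le Q P m n \<longleftrightarrow> (\<exists>p\<in>P. n = m \<otimes>\<^bsub>Q\<^esub> p)"

definition subsemigroup_with_unit :: "('q, 'b) monoid_scheme \<Rightarrow> 'q set \<Rightarrow> bool" where
  "subsemigroup_with_unit Q P \<longleftrightarrow> group Q \<and> P \<subseteq> carrier Q \<and> \<one>\<^bsub>Q\<^esub> \<in> P \<and>
     (\<forall>m\<in>P. \<forall>n\<in>P. m \<otimes>\<^bsub>Q\<^esub> n \<in> P)"

definition quasi_lattice_ordered :: "('q, 'b) monoid_scheme \<Rightarrow> 'q set \<Rightarrow> bool" where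
  "quasi_lattice_ordered Q P \<longleftrightarrow>
     subsemigroup_with_unit Q P \<and>
     (\<forall>p\<in>P. inv\<^bsub>Q\<^esub> p \<in> P \<longrightarrow> p = \<one>\<^bsub>Q\<^esub>) \<and>
     (\<forall>m\<in>P. \<forall>n\<in>P. (\<exists>r\<in>P. sg_le Q P m r \<and> sg_le Q P n r) \<longrightarrow>
        (\<exists>l\<in>P. sg_le Q P m l \<and> sg_le Q P n l \<and>
           (\<forall>r\<in>P. sg_le Q P m r \<and> sg_le Q P n r \<longrightarrow> sg_le Q P l r)))"

text \<open>A partial action of P on the set Y: D is the domain Y*P, T x m is x\<cdot>m.\<close>
definition partial_action ::
  "('q, 'b) monoid_scheme \<Rightarrow> 'q set \<Rightarrow> 'y set \<Rightarrow> ('y \<times> 'q) set \<Rightarrow> ('y \<Rightarrow> 'q \<Rightarrow> 'y) \<Rightarrow> bool" where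
  "partial_action Q P Y D T \<longleftrightarrow>
     D \<subseteq> Y \<times> P \<and>
     (\<forall>(x,m)\<in>D. T x m \<in> Y) \<and>
     (\<forall>x\<in>Y. (x, \<one>\<^bsub>Q\<^esub>) \<in> D \<and> T x \<one>\<^bsub>Q\<^esub> = x) \<and>
     (\<forall>x\<in>Y. \<forall>m\<in>P. \<forall>n\<in>P.
        ((x, m \<otimes>\<^bsub>Q\<^esub> n) \<in> D \<longleftrightarrow> (x, m) \<in> D \<and> (T x m, n) \<in> D) \<and>
        ((x, m \<otimes>\<^bsub>Q\<^esub> n) \<in> D \<longrightarrow> T (T x m) n = T x (m \<otimes>\<^bsub>Q\<^esub> n)))"

definition dom_U :: "('y \<times> 'q) set \<Rightarrow> 'q \<Rightarrow> 'y set" where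
  "dom_U D m = {x. (x, m) \<in> D}"

definition ran_V :: "('y \<times> 'q) set \<Rightarrow> ('y \<Rightarrow> 'q \<Rightarrow> 'y) \<Rightarrow> 'q \<Rightarrow> 'y set" where
  "ran_V D T m = (\<lambda>x. T x m) ` dom_U D m"

definition directed_action ::
  "('q, 'b) monoid_scheme \<Rightarrow> 'q set \<Rightarrow> ('y \<times> 'q) set \<Rightarrow> bool" where
  "directed_action Q P D \<longleftrightarrow>
     (\<forall>m\<in>P. \<forall>n\<in>P. dom_U D m \<inter> dom_U D n \<noteq> {} \<longrightarrow>
        (\<exists>r\<in>P. sg_le Q P m r \<and> sg_le Q P n r \<and> dom_U D m \<inter> dom_U D n = dom_U D r))"

definition local_homeomorphism_on :: "'y topology \<Rightarrow> 'y set \<Rightarrow> ('y \<Rightarrow> 'y) \<Rightarrow> bool" where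
  "local_homeomorphism_on X U f \<longleftrightarrow>
     (\<forall>x\<in>U. \<exists>W. openin X W \<and> x \<in> W \<and> W \<subseteq> U \<and> openin X (f ` W) \<and>
        homeomorphic_map (subtopology X W) (subtopology X (f ` W)) f)"

definition locally_compact_action ::
  "('q, 'b) monoid_scheme \<Rightarrow> 'q set \<Rightarrow> 'y topology \<Rightarrow> ('y \<times> 'q) set \<Rightarrow> ('y \<Rightarrow> 'q \<Rightarrow> 'y) \<Rightarrow> bool" where
  "locally_compact_action Q P X D T \<longleftrightarrow>
     partial_action Q P (topspace X) D T \<and>
     locally_compact_space X \<and> Hausdorff_space X \<and>
     (\<forall>m\<in>P. openin X (dom_U D m) \<and> openin X (ran_V D T m) \<and>
        local_homeomorphism_on X (dom_U D m) (\<lambda>x. T x m))"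

text \<open>Elements of \<Lambda> are the pairs (x,n) in D; r(x,n) = x, s(x,n) = x\<cdot>n, d(x,n) = n.\<close>
definition lam_topology :: "'q set \<Rightarrow> 'y topology \<Rightarrow> ('y \<times> 'q) set \<Rightarrow> ('y \<times> 'q) topology" where
  "lam_topology P X D = subtopology (prod_topology X (discrete_topology P)) D"

definition lam_s :: "('y \<Rightarrow> 'q \<Rightarrow> 'y) \<Rightarrow> 'y \<times> 'q \<Rightarrow> 'y" where
  "lam_s T lam = T (fst lam) (snd lam)"

text \<open>Composition (x,m)(x\<cdot>m,n) = (x,mn), used only for composable pairs.\<close>
definition lam_comp :: "('q, 'b) monoid_scheme \<Rightarrow> 'y \<times> 'q \<Rightarrow> 'y \<times> 'q \<Rightarrow> 'y \<times> 'q" where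
  "lam_comp Q \<mu> \<nu> = (fst \<mu>, snd \<mu> \<otimes>\<^bsub>Q\<^esub> snd \<nu>)"

definition lam_le :: "('q, 'b) monoid_scheme \<Rightarrow> ('y \<times> 'q) set \<Rightarrow> ('y \<Rightarrow> 'q \<Rightarrow> 'y) \<Rightarrow>
    'y \<times> 'q \<Rightarrow> 'y \<times> 'q \<Rightarrow> bool" where
  "lam_le Q D T \<mu> lam \<longleftrightarrow> (\<exists>\<nu>\<in>D. fst \<nu> = lam_s T \<mu> \<and> lam = lam_comp Q \<mu> \<nu>)"

definition fell_topology :: "'a topology \<Rightarrow> 'a set topology" where
  "fell_topology L = topology_generated_by
     ({{A. closedin L A \<and> A \<inter> K = {}} | K. compactin L K} \<union>
      {{A. closedin L A \<and> A \<inter> V \<noteq> {}} | V. openin L V})"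

definition path_space :: "('q, 'b) monoid_scheme \<Rightarrow> 'q set \<Rightarrow> 'y topology \<Rightarrow> ('y \<times> 'q) set \<Rightarrow>
    ('y \<Rightarrow> 'q \<Rightarrow> 'y) \<Rightarrow> ('y \<times> 'q) set set" where
  "path_space Q P X D T =
     {A. A \<noteq> {} \<and> closedin (lam_topology P X D) A \<and>
         (\<forall>lam\<in>A. \<forall>\<mu>\<in>D. lam_le Q D T \<mu> lam \<longrightarrow> \<mu> \<in> A) \<and>
         (\<forall>\<mu>\<in>A. \<forall>lam\<in>A. \<exists>\<nu>\<in>A. lam_le Q D T \<mu> \<nu> \<and> lam_le Q D T lam \<nu>)}"

definition path_shift :: "('q, 'b) monoid_scheme \<Rightarrow> ('y \<times> 'q) set \<Rightarrow> ('y \<Rightarrow> 'q \<Rightarrow> 'y) \<Rightarrow>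
    ('y \<times> 'q) set \<Rightarrow> 'q \<Rightarrow> ('y \<times> 'q) set" where
  "path_shift Q D T A n =
     {\<nu>\<in>D. \<exists>\<mu>\<in>D. snd \<mu> = n \<and> lam_s T \<mu> = fst \<nu> \<and> lam_comp Q \<mu> \<nu> \<in> A}"

definition exhaustive :: "('q, 'b) monoid_scheme \<Rightarrow> ('y \<times> 'q) set \<Rightarrow> ('y \<Rightarrow> 'q \<Rightarrow> 'y) \<Rightarrow>
    ('y \<times> 'q) set \<Rightarrow> bool" where
  "exhaustive Q D T E \<longleftrightarrow> E \<subseteq> D \<and>
     (\<forall>lam\<in>D. fst lam \<in> fst ` E \<longrightarrow>
        (\<exists>\<mu>\<in>E. \<exists>\<nu>\<in>D. lam_le Q D T lam \<nu> \<and> lam_le Q D T \<mu> \<nu>))"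

definition extendable :: "('q, 'b) monoid_scheme \<Rightarrow> 'q set \<Rightarrow> 'y topology \<Rightarrow> ('y \<times> 'q) set \<Rightarrow>
    ('y \<Rightarrow> 'q \<Rightarrow> 'y) \<Rightarrow> 'y \<times> 'q \<Rightarrow> ('y \<times> 'q) set \<Rightarrow> bool" where
  "extendable Q P X D T lam A \<longleftrightarrow>
     (\<forall>E. compactin (lam_topology P X D) E \<and> exhaustive Q D T E \<and>
          (\<exists>W. openin X W \<and> lam_s T lam \<in> W \<and> W \<subseteq> fst ` E) \<longrightarrow>
        (\<exists>\<mu>\<in>E. fst \<mu> = lam_s T lam \<and> lam_comp Q lam \<mu> \<in> A))"

definition boundary_path_space :: "('q, 'b) monoid_scheme \<Rightarrow> 'q set \<Rightarrow> 'y topology \<Rightarrow>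
    ('y \<times> 'q) set \<Rightarrow> ('y \<Rightarrow> 'q \<Rightarrow> 'y) \<Rightarrow> ('y \<times> 'q) set set" where
  "boundary_path_space Q P X D T =
     {A \<in> path_space Q P X D T. \<forall>lam\<in>A. extendable Q P X D T lam A}"

definition boundary_topology :: "'q set \<Rightarrow> 'y topology \<Rightarrow> ('y \<times> 'q) set \<Rightarrow>
    ('q, 'b) monoid_scheme \<Rightarrow> ('y \<Rightarrow> 'q \<Rightarrow> 'y) \<Rightarrow> ('y \<times> 'q) set topology" where
  "boundary_topology P X D Q T =
     subtopology (fell_topology (lam_topology P X D)) (boundary_path_space Q P X D T)"

text \<open>Domain of the shift action on \<partial>\<Omega>: A\<cdot>n defined iff A\<cdot>n is nonempty.\<close>
definition boundary_dom :: "('q, 'b) monoid_scheme \<Rightarrow> 'q set \<Rightarrow> 'y topology \<Rightarrow>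
    ('y \<times> 'q) set \<Rightarrow> ('y \<Rightarrow> 'q \<Rightarrow> 'y) \<Rightarrow> (('y \<times> 'q) set \<times> 'q) set" where
  "boundary_dom Q P X D T =
     {(A, n). A \<in> boundary_path_space Q P X D T \<and> n \<in> P \<and> path_shift Q D T A n \<noteq> {}}"

definition action_groupoid :: "('q, 'b) monoid_scheme \<Rightarrow> 'q set \<Rightarrow> 'y set \<Rightarrow> ('y \<times> 'q) set \<Rightarrow>
    ('y \<Rightarrow> 'q \<Rightarrow> 'y) \<Rightarrow> ('y \<times> 'q \<times> 'y) set" where
  "action_groupoid Q P Y D S =
     {(x, q, y). x \<in> Y \<and> y \<in> Y \<and>
        (\<exists>m\<in>P. \<exists>n\<in>P. q = m \<otimes>\<^bsub>Q\<^esub> inv\<^bsub>Q\<^esub> n \<and> (x, m) \<in> D \<and> (y, n) \<in> D \<and> S x m = S y n)}"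

definition groupoid_basic_set :: "('q, 'b) monoid_scheme \<Rightarrow> ('y \<times> 'q) set \<Rightarrow> ('y \<Rightarrow> 'q \<Rightarrow> 'y) \<Rightarrow>
    'y set \<Rightarrow> 'q \<Rightarrow> 'q \<Rightarrow> 'y set \<Rightarrow> ('y \<times> 'q \<times> 'y) set" where
  "groupoid_basic_set Q D S U m n V =
     {(x, m \<otimes>\<^bsub>Q\<^esub> inv\<^bsub>Q\<^esub> n, y) | x y. x \<in> U \<and> y \<in> V \<and> (x, m) \<in> D \<and> (y, n) \<in> D \<and> S x m = S y n}"

definition groupoid_topology :: "('q, 'b) monoid_scheme \<Rightarrow> 'q set \<Rightarrow> 'y topology \<Rightarrow> ('y \<times> 'q) set \<Rightarrow>
    ('y \<Rightarrow> 'q \<Rightarrow> 'y) \<Rightarrow> ('y \<times> 'q \<times> 'y) topology" where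
  "groupoid_topology Q P Y D S = topology_generated_by
     {groupoid_basic_set Q D S U m n V | U m n V. openin Y U \<and> openin Y V \<and> m \<in> P \<and> n \<in> P}"

definition gpd_mult :: "('q, 'b) monoid_scheme \<Rightarrow> 'y \<times> 'q \<times> 'y \<Rightarrow> 'y \<times> 'q \<times> 'y \<Rightarrow> 'y \<times> 'q \<times> 'y" where
  "gpd_mult Q g h = (fst g, fst (snd g) \<otimes>\<^bsub>Q\<^esub> fst (snd h), snd (snd h))"

definition gpd_inv :: "('q, 'b) monoid_scheme \<Rightarrow> 'y \<times> 'q \<times> 'y \<Rightarrow> 'y \<times> 'q \<times> 'y" where
  "gpd_inv Q g = (snd (snd g), inv\<^bsub>Q\<^esub> (fst (snd g)), fst g)"

definition groupoid_iso :: "('q, 'b) monoid_scheme \<Rightarrow>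
    ('y \<times> 'q \<times> 'y) set \<Rightarrow> ('y \<times> 'q \<times> 'y) topology \<Rightarrow>
    ('z \<times> 'q \<times> 'z) set \<Rightarrow> ('z \<times> 'q \<times> 'z) topology \<Rightarrow>
    ('y \<times> 'q \<times> 'y \<Rightarrow> 'z \<times> 'q \<times> 'z) \<Rightarrow> bool" where
  "groupoid_iso Q G1 T1 G2 T2 \<Phi> \<longleftrightarrow>
     bij_betw \<Phi> G1 G2 \<and>
     homeomorphic_map (subtopology T1 G1) (subtopology T2 G2) \<Phi> \<and>
     (\<forall>g\<in>G1. \<forall>h\<in>G1. snd (snd g) = fst h \<longrightarrow> \<Phi> (gpd_mult Q g h) = gpd_mult Q (\<Phi> g) (\<Phi> h)) \<and>
     (\<forall>g\<in>G1. \<Phi> (gpd_inv Q g) = gpd_inv Q (\<Phi> g))"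

end

theory Submission imports Defs begin

lemma gen_image:
  assumes inj: "inj_on f (\<Union>B1)" and B2: "B2 = (\<lambda>U. f ` U) ` B1"
  shows "generate_topology_on B1 U \<Longrightarrow> U \<subseteq> \<Union>B1 \<and> generate_topology_on B2 (f ` U)"
proof (induction rule: generate_topology_on.induct)
  case Empty
  then show ?case by (simp add: generate_topology_on.Empty)
next
  case (Int a b)
  have "f ` (a \<inter> b) = f ` a \<inter> f ` b"
    using Int.IH inj by (intro inj_on_image_Int[of f "\<Union>B1"]) auto
  then show ?case using Int.IH by (auto intro: generate_topology_on.Int)
next
  case (UN K)
  have "f ` \<Union>K = \<Union>((\<lambda>k. f ` k) ` K)" by auto
  moreover have "generate_topology_on B2 (\<Union>((\<lambda>k. f ` k) ` K))"
    using UN.IH by (intro generate_topology_on.UN) auto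
  ultimately show ?case using UN.IH by auto
next
  case (Basis s)
  then show ?case using B2 by (auto intro: generate_topology_on.Basis)
qed

lemma homeo_generated:
  assumes inj: "inj_on f (\<Union>B1)" and B2: "B2 = (\<lambda>U. f ` U) ` B1"
  shows "homeomorphic_map (topology_generated_by B1) (topology_generated_by B2) f"
proof (rule bijective_open_imp_homeomorphic_map)
  show "continuous_map (topology_generated_by B1) (topology_generated_by B2) f"
  proof (rule continuous_on_generated_topo)
    fix U' assume "U' \<in> B2"
    then obtain U where U: "U \<in> B1" "U' = f ` U" using B2 by auto
    have "f -` U' \<inter> topspace (topology_generated_by B1) = U"
      using U inj unfolding inj_on_def by auto
    then show "openin (topology_generated_by B1) (f -` U' \<inter> topspace (topology_generated_by B1))"
      using U(1) by (simp add: topology_generated_by_Basis)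
  next
    show "f ` topspace (topology_generated_by B1) \<subseteq> \<Union>B2" using B2 by auto
  qed
  show "open_map (topology_generated_by B1) (topology_generated_by B2) f"
    unfolding open_map_def openin_topology_generated_by_iff
    using gen_image[OF inj B2] by blast
  show "f ` topspace (topology_generated_by B1) = topspace (topology_generated_by B2)"
    using B2 by auto
  show "inj_on f (topspace (topology_generated_by B1))" using inj by simp
qed

locale pg =
  fixes Q :: "('q, 'b) monoid_scheme" and P :: "'q set"
    and X :: "'x topology" and D :: "('x \<times> 'q) set" and T :: "'x \<Rightarrow> 'q \<Rightarrow> 'x"
  assumes qlo: "quasi_lattice_ordered Q P"
    and lca: "locally_compact_action Q P X D T"
    and dir: "directed_action Q P D"
begin

lemma grp: "group Q" and PQ: "P \<subseteq> carrier Q" and eP: "\<one>\<^bsub>Q\<^esub> \<in> P"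
  and mulP: "m \<in> P \<Longrightarrow> n \<in> P \<Longrightarrow> m \<otimes>\<^bsub>Q\<^esub> n \<in> P"
  using qlo unfolding quasi_lattice_ordered_def subsemigroup_with_unit_def by auto

lemma pa: "partial_action Q P (topspace X) D T"
  and lc: "locally_compact_space X" and hd: "Hausdorff_space X"
  and Uopen: "m \<in> P \<Longrightarrow> openin X (dom_U D m)"
  using lca unfolding locally_compact_action_def by auto

lemma DS: "D \<subseteq> topspace X \<times> P"
  using pa unfolding partial_action_def by auto

lemma Tin: "(x,m) \<in> D \<Longrightarrow> T x m \<in> topspace X"
  using pa unfolding partial_action_def by auto

lemma unit: "x \<in> topspace X \<Longrightarrow> (x, \<one>\<^bsub>Q\<^esub>) \<in> D \<and> T x \<one>\<^bsub>Q\<^esub> = x"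
  using pa unfolding partial_action_def by auto

lemma comp: "(x,m) \<in> D \<Longrightarrow> p \<in> P \<Longrightarrow> (x, m \<otimes>\<^bsub>Q\<^esub> p) \<in> D \<longleftrightarrow> (T x m, p) \<in> D"
  using pa DS unfolding partial_action_def by blast

lemma lone: "m \<in> P \<Longrightarrow> \<one>\<^bsub>Q\<^esub> \<otimes>\<^bsub>Q\<^esub> m = m"
  using grp PQ by (meson group.is_monoid monoid.l_one subsetD)

lemma dirD: assumes "(y,m) \<in> D" "(y,n) \<in> D"
  shows "\<exists>\<nu>\<in>D. lam_le Q D T (y,m) \<nu> \<and> lam_le Q D T (y,n) \<nu>"
proof -
  have mP: "m \<in> P" "n \<in> P" using assms DS by auto
  have "dom_U D m \<inter> dom_U D n \<noteq> {}" using assms unfolding dom_U_def by auto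
  then obtain r where r: "r \<in> P" "sg_le Q P m r" "sg_le Q P n r"
    "dom_U D m \<inter> dom_U D n = dom_U D r"
    using dir mP unfolding directed_action_def by blast
  have yr: "(y,r) \<in> D" using r(4) assms unfolding dom_U_def by auto
  obtain p where p: "p \<in> P" "r = m \<otimes>\<^bsub>Q\<^esub> p" using r(2) unfolding sg_le_def by auto
  obtain p' where p': "p' \<in> P" "r = n \<otimes>\<^bsub>Q\<^esub> p'" using r(3) unfolding sg_le_def by auto
  have "(T y m, p) \<in> D" using comp[OF assms(1) p(1)] yr p by simp
  moreover have "(T y n, p') \<in> D" using comp[OF assms(2) p'(1)] yr p' by simp
  ultimately show ?thesis using yr p p'
    unfolding lam_le_def lam_s_def lam_comp_def
    by (intro bexI[of _ "(y,r)"]) force+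
qed

definition J :: "'x \<Rightarrow> ('x \<times> 'q) set" where
  "J x = {l \<in> D. fst l = x}"

lemma shift_J: assumes "(x,m) \<in> D"
  shows "path_shift Q D T (J x) m = J (T x m)"
proof -
  have mP: "m \<in> P" using assms DS by auto
  show ?thesis
  proof (rule equalityI; rule subsetI)
    fix v assume "v \<in> path_shift Q D T (J x) m"
    then obtain mu where "v \<in> D" "mu \<in> D" "snd mu = m" "lam_s T mu = fst v" "lam_comp Q mu v \<in> J x"
      unfolding path_shift_def by auto
    then show "v \<in> J (T x m)" unfolding J_def lam_s_def lam_comp_def
      by (cases mu) auto
  next
    fix v assume v: "v \<in> J (T x m)"
    obtain y p where vy: "v = (y,p)" by (cases v)
    have "(T x m, p) \<in> D" "y = T x m" using v vy unfolding J_def by auto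
    moreover have "p \<in> P" using calculation DS by auto
    ultimately have "(x, m \<otimes>\<^bsub>Q\<^esub> p) \<in> D" using comp[OF assms] by auto
    then show "v \<in> path_shift Q D T (J x) m" using v vy assms \<open>y = T x m\<close>
      unfolding path_shift_def J_def lam_s_def lam_comp_def
      by (intro CollectI conjI bexI[of _ "(x,m)"]) auto
  qed
qed

lemma shift_ne: "path_shift Q D T (J x) m \<noteq> {} \<Longrightarrow> (x,m) \<in> D"
  unfolding path_shift_def J_def lam_comp_def by auto

lemma J_ne: "x \<in> topspace X \<Longrightarrow> (x, \<one>\<^bsub>Q\<^esub>) \<in> J x"
  using unit unfolding J_def by auto

lemma J_inj: "x \<in> topspace X \<Longrightarrow> J x = J y \<Longrightarrow> x = y"
proof -
  assume a: "x \<in> topspace X" "J x = J y"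
  have "(x, \<one>\<^bsub>Q\<^esub>) \<in> J y" using J_ne[OF a(1)] a(2) by simp
  then show "x = y" unfolding J_def by simp
qed


abbreviation "L \<equiv> lam_topology P X D"

lemma topL: "topspace L = D"
  using DS unfolding lam_topology_def by auto

lemma J_closed: assumes "x \<in> topspace X" shows "closedin L (J x)"
proof -
  have "closedin X {x}" using assms hd by (simp add: Hausdorff_imp_t1_space closedin_t1_singleton)
  then have "closedin (prod_topology X (discrete_topology P)) ({x} \<times> P)"
    by (simp add: closedin_prod_Times_iff)
  moreover have "J x = ({x} \<times> P) \<inter> D" using DS unfolding J_def by auto
  ultimately show ?thesis unfolding lam_topology_def closedin_subtopology by blast
qed

lemma J_path: assumes "x \<in> topspace X" shows "J x \<in> path_space Q P X D T"
proof -
  have "J x \<noteq> {}" using J_ne[OF assms] by auto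
  moreover have "\<forall>lam\<in>J x. \<forall>\<mu>\<in>D. lam_le Q D T \<mu> lam \<longrightarrow> \<mu> \<in> J x"
    unfolding J_def lam_le_def lam_comp_def by auto
  moreover have "\<forall>\<mu>\<in>J x. \<forall>lam\<in>J x. \<exists>\<nu>\<in>J x. lam_le Q D T \<mu> \<nu> \<and> lam_le Q D T lam \<nu>"
  proof (intro ballI)
    fix mu lam assume a: "mu \<in> J x" "lam \<in> J x"
    then obtain m n where mn: "mu = (x,m)" "lam = (x,n)" "(x,m) \<in> D" "(x,n) \<in> D"
      unfolding J_def by (cases mu, cases lam) auto
    then obtain v where v: "v \<in> D" "lam_le Q D T (x,m) v" "lam_le Q D T (x,n) v"
      using dirD by blast
    then have "fst v = x" unfolding lam_le_def lam_comp_def by auto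
    then show "\<exists>\<nu>\<in>J x. lam_le Q D T mu \<nu> \<and> lam_le Q D T lam \<nu>"
      using v mn unfolding J_def by (intro bexI[of _ v]) auto
  qed
  ultimately show ?thesis using J_closed[OF assms] unfolding path_space_def by auto
qed

lemma J_bd: assumes "x \<in> topspace X" shows "J x \<in> boundary_path_space Q P X D T"
proof -
  have "extendable Q P X D T lam (J x)" if lam: "lam \<in> J x" for lam
    unfolding extendable_def
  proof (intro allI impI)
    fix E assume E: "compactin L E \<and> exhaustive Q D T E \<and>
          (\<exists>W. openin X W \<and> lam_s T lam \<in> W \<and> W \<subseteq> fst ` E)"
    then obtain mu where mu: "mu \<in> E" "fst mu = lam_s T lam" by force
    have ED: "E \<subseteq> D" using E unfolding exhaustive_def by auto
    obtain m where lm: "lam = (x,m)" "(x,m) \<in> D" using lam unfolding J_def by (cases lam) auto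
    obtain y p where yp: "mu = (y,p)" by (cases mu)
    have "(y,p) \<in> D" using mu ED yp by auto
    moreover have "y = T x m" using mu yp lm unfolding lam_s_def by auto
    moreover have "p \<in> P" using calculation DS by auto
    ultimately have "(x, m \<otimes>\<^bsub>Q\<^esub> p) \<in> D" using comp[OF lm(2)] by auto
    then show "\<exists>\<mu>\<in>E. fst \<mu> = lam_s T lam \<and> lam_comp Q lam \<mu> \<in> J x"
      using mu yp lm unfolding lam_comp_def J_def by (intro bexI[of _ mu]) auto
  qed
  then show ?thesis using J_path[OF assms] unfolding boundary_path_space_def by auto
qed

lemma bd_J: assumes A: "A \<in> boundary_path_space Q P X D T"
  shows "\<exists>x\<in>topspace X. A = J x"
proof -
  have Ap: "A \<noteq> {}" "closedin L A"
    "\<forall>lam\<in>A. \<forall>\<mu>\<in>D. lam_le Q D T \<mu> lam \<longrightarrow> \<mu> \<in> A"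
    "\<forall>\<mu>\<in>A. \<forall>lam\<in>A. \<exists>\<nu>\<in>A. lam_le Q D T \<mu> \<nu> \<and> lam_le Q D T lam \<nu>"
    "\<forall>lam\<in>A. extendable Q P X D T lam A"
    using A unfolding boundary_path_space_def path_space_def by auto
  have AD: "A \<subseteq> D" using closedin_subset[OF Ap(2)] topL by simp
  obtain x m0 where x: "(x,m0) \<in> A" using Ap(1) by auto
  have xD: "(x,m0) \<in> D" using x AD by auto
  have xt: "x \<in> topspace X" using xD DS by auto
  have m0P: "m0 \<in> P" using xD DS by auto
  have xe: "(x, \<one>\<^bsub>Q\<^esub>) \<in> A"
  proof -
    have "lam_le Q D T (x, \<one>\<^bsub>Q\<^esub>) (x,m0)"
      unfolding lam_le_def lam_s_def lam_comp_def
      using unit[OF xt] xD lone[OF m0P] by (intro bexI[of _ "(x,m0)"]) auto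
    then show ?thesis using Ap(3) x unit[OF xt] by blast
  qed
  have sub: "A \<subseteq> J x"
  proof
    fix l assume l: "l \<in> A"
    then obtain v where "lam_le Q D T (x,m0) v" "lam_le Q D T l v" using Ap(4) x by blast
    then have "fst l = x" unfolding lam_le_def lam_comp_def by auto
    then show "l \<in> J x" using l AD unfolding J_def by auto
  qed
  have sup: "J x \<subseteq> A"
  proof
    fix l assume l: "l \<in> J x"
    then obtain n where ln: "l = (x,n)" "(x,n) \<in> D" unfolding J_def by (cases l) auto
    have nP: "n \<in> P" using ln DS by auto
    have xU: "x \<in> dom_U D n" using ln unfolding dom_U_def by auto
    have "neighbourhood_base_of (compactin X) X"
      using lc hd locally_compact_space_neighbourhood_base by blast
    then have "\<exists>W K. openin X W \<and> compactin X K \<and> x \<in> W \<and> W \<subseteq> K \<and> K \<subseteq> dom_U D n"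
      using Uopen[OF nP] xU unfolding neighbourhood_base_of by simp
    then obtain W K where WK: "openin X W" "compactin X K" "x \<in> W" "W \<subseteq> K" "K \<subseteq> dom_U D n"
      by auto
    define E where "E = K \<times> {n}"
    have ED: "E \<subseteq> D" using WK(5) unfolding E_def dom_U_def by auto
    have "compactin (prod_topology X (discrete_topology P)) E"
      unfolding E_def compactin_Times using WK(2) nP by (simp add: compactin_discrete_topology)
    then have Ec: "compactin L E" using ED unfolding lam_topology_def compactin_subtopology by auto
    have Eex: "exhaustive Q D T E"
      unfolding exhaustive_def
    proof (intro conjI ballI impI)
      show "E \<subseteq> D" by (rule ED)
      fix lam assume lam: "lam \<in> D" "fst lam \<in> fst ` E"
      obtain y m where ym: "lam = (y,m)" by (cases lam)
      have yK: "y \<in> K" using lam ym unfolding E_def by auto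
      have "(y,n) \<in> D" using yK ED unfolding E_def by auto
      then obtain v where "v \<in> D" "lam_le Q D T (y,m) v" "lam_le Q D T (y,n) v"
        using dirD lam ym by blast
      moreover have "(y,n) \<in> E" using yK unfolding E_def by auto
      ultimately show "\<exists>\<mu>\<in>E. \<exists>\<nu>\<in>D. lam_le Q D T lam \<nu> \<and> lam_le Q D T \<mu> \<nu>"
        using ym by blast
    qed
    have Wex: "\<exists>W. openin X W \<and> lam_s T (x, \<one>\<^bsub>Q\<^esub>) \<in> W \<and> W \<subseteq> fst ` E"
      using WK unit[OF xt] unfolding lam_s_def E_def by (intro exI[of _ W]) auto
    have ext: "extendable Q P X D T (x, \<one>\<^bsub>Q\<^esub>) A" using Ap(5) xe by simp
    obtain mu where mu: "mu \<in> E" "lam_comp Q (x, \<one>\<^bsub>Q\<^esub>) mu \<in> A"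
      using ext[unfolded extendable_def, rule_format, OF conjI[OF Ec conjI[OF Eex Wex]]] by auto
    have "snd mu = n" using mu unfolding E_def by auto
    then show "l \<in> A" using mu ln lone[OF nP] unfolding lam_comp_def by auto
  qed
  have "A = J x" using sub sup by (rule subset_antisym)
  then show ?thesis using xt by (intro bexI[of _ x])
qed

lemma J_image: "J ` topspace X = boundary_path_space Q P X D T"
  using J_bd bd_J by blast


abbreviation "BP \<equiv> boundary_path_space Q P X D T"
abbreviation "FS \<equiv> {{A. closedin L A \<and> A \<inter> K = {}} | K. compactin L K} \<union>
      {{A. closedin L A \<and> A \<inter> V \<noteq> {}} | V. openin L V}"

lemma fell_eq: "fell_topology L = topology_generated_by FS"
  unfolding fell_topology_def by simp

lemma BP_sub: "BP \<subseteq> \<Union>FS"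
proof
  fix A assume "A \<in> BP"
  then have "closedin L A" unfolding boundary_path_space_def path_space_def by auto
  then have "A \<in> {A. closedin L A \<and> A \<inter> {} = {}}" by auto
  moreover have "{A. closedin L A \<and> A \<inter> {} = {}} \<in> {{A. closedin L A \<and> A \<inter> K = {}} | K. compactin L K}"
    by (rule CollectI, rule exI[of _ "{}"]) simp
  ultimately show "A \<in> \<Union>FS" by (intro UnionI[OF UnI1]) 
qed

lemma topBT: "topspace (boundary_topology P X D Q T) = BP"
  unfolding boundary_topology_def fell_eq using BP_sub by auto

lemma J_cont_F: "continuous_map X (fell_topology L) J"
  unfolding fell_eq
proof (rule continuous_on_generated_topo)
  show "J ` topspace X \<subseteq> \<Union>FS" using BP_sub J_bd by blast
  fix U assume "U \<in> FS"
  then consider (K) K where "compactin L K" "U = {A. closedin L A \<and> A \<inter> K = {}}"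
    | (V) V where "openin L V" "U = {A. closedin L A \<and> A \<inter> V \<noteq> {}}"
    by (elim UnE CollectE exE conjE) auto
  then show "openin X (J -` U \<inter> topspace X)"
  proof cases
    case K
    have KD: "K \<subseteq> D" using compactin_subset_topspace[OF K(1)] topL by simp
    have "continuous_map L X fst"
      unfolding lam_topology_def by (intro continuous_map_from_subtopology continuous_map_fst)
    then have "compactin X (fst ` K)" using image_compactin K(1) by blast
    then have "closedin X (fst ` K)" using compactin_imp_closedin hd by blast
    moreover have "J -` U \<inter> topspace X = topspace X - fst ` K"
    proof (intro equalityI subsetI)
      fix x assume x: "x \<in> J -` U \<inter> topspace X"
      then have "J x \<inter> K = {}" "x \<in> topspace X" using K(2) by auto
      then show "x \<in> topspace X - fst ` K" using KD unfolding J_def by force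
    next
      fix x assume x: "x \<in> topspace X - fst ` K"
      then have "J x \<inter> K = {}" unfolding J_def by force
      then show "x \<in> J -` U \<inter> topspace X" using x K(2) J_closed by auto
    qed
    ultimately show ?thesis by (simp add: openin_diff)
  next
    case V
    obtain Ob where Ob: "openin (prod_topology X (discrete_topology P)) Ob" "V = Ob \<inter> D"
      using V(1) unfolding lam_topology_def openin_subtopology by blast
    have eq: "J -` U \<inter> topspace X =
      (\<Union>m\<in>P. {x \<in> topspace X. (id x, m) \<in> Ob} \<inter> dom_U D m)"
    proof (intro equalityI subsetI)
      fix x assume x: "x \<in> J -` U \<inter> topspace X"
      then obtain l where l: "l \<in> J x" "l \<in> V" using V(2) by auto
      obtain y m where lm: "l = (y,m)" by (cases l)
      have "y = x" "(x,m) \<in> D" "(x,m) \<in> Ob" "m \<in> P" using l lm Ob(2) DS unfolding J_def by auto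
      then show "x \<in> (\<Union>m\<in>P. {x \<in> topspace X. (id x, m) \<in> Ob} \<inter> dom_U D m)"
        using x unfolding dom_U_def by auto
    next
      fix x assume x: "x \<in> (\<Union>m\<in>P. {x \<in> topspace X. (id x, m) \<in> Ob} \<inter> dom_U D m)"
      then obtain m where m: "m \<in> P" "x \<in> topspace X" "(x,m) \<in> Ob" "(x,m) \<in> D"
        unfolding dom_U_def by auto
      then have "(x,m) \<in> J x \<inter> V" using Ob(2) unfolding J_def by auto
      then show "x \<in> J -` U \<inter> topspace X" using V(2) J_closed m(2) by auto
    qed
    have "openin X ({x \<in> topspace X. (id x, m) \<in> Ob} \<inter> dom_U D m)" if m: "m \<in> P" for m
    proof -
      have "continuous_map X (prod_topology X (discrete_topology P)) (\<lambda>x. (id x, m))"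
        using m by (intro continuous_map_pairedI continuous_map_id) simp
      then have "openin X {x \<in> topspace X. (id x, m) \<in> Ob}"
        using openin_continuous_map_preimage Ob(1) by blast
      then show ?thesis using Uopen[OF m] by blast
    qed
    then show ?thesis unfolding eq by blast
  qed
qed

lemma J_cont: "continuous_map X (boundary_topology P X D Q T) J"
  unfolding boundary_topology_def continuous_map_in_subtopology
  using J_cont_F J_bd by blast

lemma J_open: "open_map X (boundary_topology P X D Q T) J"
  unfolding open_map_def
proof (intro allI impI)
  fix W assume W: "openin X W"
  define V where "V = (W \<times> {\<one>\<^bsub>Q\<^esub>}) \<inter> D"
  have "openin (prod_topology X (discrete_topology P)) (W \<times> {\<one>\<^bsub>Q\<^esub>})"
    using W eP by (simp add: openin_prod_Times_iff)
  then have "openin L V" unfolding V_def lam_topology_def by (rule openin_subtopology_Int)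
  then have "{A. closedin L A \<and> A \<inter> V \<noteq> {}} \<in> {{A. closedin L A \<and> A \<inter> V \<noteq> {}} | V. openin L V}"
    by (intro CollectI exI[of _ V]) simp
  then have "{A. closedin L A \<and> A \<inter> V \<noteq> {}} \<in> FS" by (rule UnI2)
  then have op: "openin (fell_topology L) {A. closedin L A \<and> A \<inter> V \<noteq> {}}"
    unfolding fell_eq by (rule topology_generated_by_Basis)
  have "J ` W = {A. closedin L A \<and> A \<inter> V \<noteq> {}} \<inter> BP"
  proof (intro equalityI subsetI)
    fix A assume "A \<in> J ` W"
    then obtain x where x: "x \<in> W" "A = J x" by auto
    have xt: "x \<in> topspace X" using x W openin_subset by blast
    have "(x, \<one>\<^bsub>Q\<^esub>) \<in> A \<inter> V" using x J_ne[OF xt] unfolding V_def J_def by auto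
    then show "A \<in> {A. closedin L A \<and> A \<inter> V \<noteq> {}} \<inter> BP"
      using J_closed[OF xt] J_bd[OF xt] x by auto
  next
    fix A assume A: "A \<in> {A. closedin L A \<and> A \<inter> V \<noteq> {}} \<inter> BP"
    then obtain x where x: "x \<in> topspace X" "A = J x" using bd_J by blast
    obtain l where "l \<in> J x" "l \<in> V" using A x by auto
    then have "x \<in> W" unfolding J_def V_def by auto
    then show "A \<in> J ` W" using x by auto
  qed
  then show "openin (boundary_topology P X D Q T) (J ` W)"
    unfolding boundary_topology_def using op by (simp add: openin_subtopology_Int)
qed

lemma J_homeo: "homeomorphic_map X (boundary_topology P X D Q T) J"
  by (rule bijective_open_imp_homeomorphic_map[OF J_cont J_open])
     (auto simp: topBT J_image inj_on_def intro: J_inj)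


abbreviation "BD \<equiv> boundary_dom Q P X D T"
abbreviation "G1 \<equiv> action_groupoid Q P (topspace X) D T"
abbreviation "G2 \<equiv> action_groupoid Q P BP BD (path_shift Q D T)"
definition "Phi = (\<lambda>(x::'x, q::'q, y::'x). (J x, q, J y))"

lemma bdom_J: assumes "x \<in> topspace X" shows "(J x, m) \<in> BD \<longleftrightarrow> (x,m) \<in> D"
proof
  assume "(J x, m) \<in> BD"
  then show "(x,m) \<in> D" unfolding boundary_dom_def using shift_ne by auto
next
  assume a: "(x,m) \<in> D"
  then have "path_shift Q D T (J x) m \<noteq> {}" using shift_J[OF a] J_ne[OF Tin[OF a]] by auto
  then show "(J x, m) \<in> BD" using a DS J_bd[OF assms] unfolding boundary_dom_def by auto
qed

lemma shift_eq: assumes "(x,m) \<in> D" "(y,n) \<in> D"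
  shows "path_shift Q D T (J x) m = path_shift Q D T (J y) n \<longleftrightarrow> T x m = T y n"
  using shift_J[OF assms(1)] shift_J[OF assms(2)] J_inj Tin[OF assms(1)] by auto

lemma G_iff: assumes "x \<in> topspace X" "y \<in> topspace X"
  shows "(J x, q, J y) \<in> G2 \<longleftrightarrow> (x,q,y) \<in> G1"
proof -
  have "(J x, q, J y) \<in> G2 \<longleftrightarrow> (\<exists>m\<in>P. \<exists>n\<in>P. q = m \<otimes>\<^bsub>Q\<^esub> inv\<^bsub>Q\<^esub> n \<and> (J x, m) \<in> BD \<and> (J y, n) \<in> BD \<and>
      path_shift Q D T (J x) m = path_shift Q D T (J y) n)"
    unfolding action_groupoid_def using J_bd assms by auto
  also have "\<dots> \<longleftrightarrow> (\<exists>m\<in>P. \<exists>n\<in>P. q = m \<otimes>\<^bsub>Q\<^esub> inv\<^bsub>Q\<^esub> n \<and> (x, m) \<in> D \<and> (y, n) \<in> D \<and> T x m = T y n)"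
    using bdom_J[OF assms(1)] bdom_J[OF assms(2)] shift_eq by meson
  also have "\<dots> \<longleftrightarrow> (x,q,y) \<in> G1"
    unfolding action_groupoid_def using assms by auto
  finally show ?thesis .
qed

lemma G1_top: "(x,q,y) \<in> G1 \<Longrightarrow> x \<in> topspace X \<and> y \<in> topspace X"
  unfolding action_groupoid_def by auto

lemma G2_form: assumes "g \<in> G2" shows "\<exists>x y q. g = (J x, q, J y) \<and> x \<in> topspace X \<and> y \<in> topspace X"
proof -
  obtain A q B where g: "g = (A,q,B)" "A \<in> BP" "B \<in> BP"
    using assms unfolding action_groupoid_def by auto
  then show ?thesis using bd_J by blast
qed

lemma Phi_img: "Phi ` G1 = G2"
proof (intro equalityI subsetI)
  fix g assume "g \<in> Phi ` G1"
  then obtain x q y where "(x,q,y) \<in> G1" "g = Phi (x,q,y)" by auto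
  then show "g \<in> G2" using G_iff G1_top unfolding Phi_def by auto
next
  fix g assume "g \<in> G2"
  then obtain x y q where g: "g = (J x, q, J y)" "x \<in> topspace X" "y \<in> topspace X"
    using G2_form by blast
  then have "(x,q,y) \<in> G1" using G_iff \<open>g \<in> G2\<close> by auto
  then show "g \<in> Phi ` G1" using g unfolding Phi_def by force
qed

lemma Phi_inj: "inj_on Phi G1"
  unfolding inj_on_def Phi_def using G1_top J_inj by auto


abbreviation "BT \<equiv> boundary_topology P X D Q T"

lemma Z_img: assumes "U \<subseteq> topspace X" "V \<subseteq> topspace X"
  shows "Phi ` groupoid_basic_set Q D T U m n V =
         groupoid_basic_set Q BD (path_shift Q D T) (J ` U) m n (J ` V)"
proof (intro equalityI subsetI)
  fix g assume "g \<in> Phi ` groupoid_basic_set Q D T U m n V"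
  then obtain x y where xy: "g = (J x, m \<otimes>\<^bsub>Q\<^esub> inv\<^bsub>Q\<^esub> n, J y)" "x \<in> U" "y \<in> V"
    "(x,m) \<in> D" "(y,n) \<in> D" "T x m = T y n"
    unfolding groupoid_basic_set_def Phi_def by auto
  have xt: "x \<in> topspace X" "y \<in> topspace X" using xy assms by auto
  have "(J x, m) \<in> BD" "(J y, n) \<in> BD" using bdom_J xt xy by auto
  moreover have "path_shift Q D T (J x) m = path_shift Q D T (J y) n" using shift_eq xy by auto
  ultimately show "g \<in> groupoid_basic_set Q BD (path_shift Q D T) (J ` U) m n (J ` V)"
    unfolding groupoid_basic_set_def using xy by blast
next
  fix g assume "g \<in> groupoid_basic_set Q BD (path_shift Q D T) (J ` U) m n (J ` V)"
  then obtain x y where xy: "g = (J x, m \<otimes>\<^bsub>Q\<^esub> inv\<^bsub>Q\<^esub> n, J y)" "x \<in> U" "y \<in> V"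
    "(J x,m) \<in> BD" "(J y,n) \<in> BD" "path_shift Q D T (J x) m = path_shift Q D T (J y) n"
    unfolding groupoid_basic_set_def by auto
  have xt: "x \<in> topspace X" "y \<in> topspace X" using xy assms by auto
  have D: "(x,m) \<in> D" "(y,n) \<in> D" using bdom_J xt xy by auto
  have "T x m = T y n" using shift_eq[OF D] xy by auto
  then have "(x, m \<otimes>\<^bsub>Q\<^esub> inv\<^bsub>Q\<^esub> n, y) \<in> groupoid_basic_set Q D T U m n V"
    unfolding groupoid_basic_set_def using xy D by blast
  moreover have "g = Phi (x, m \<otimes>\<^bsub>Q\<^esub> inv\<^bsub>Q\<^esub> n, y)" using xy unfolding Phi_def by simp
  ultimately show "g \<in> Phi ` groupoid_basic_set Q D T U m n V" by blast
qed

definition "B1 = {groupoid_basic_set Q D T U m n V | U m n V. openin X U \<and> openin X V \<and> m \<in> P \<and> n \<in> P}"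
definition "B2 = {groupoid_basic_set Q BD (path_shift Q D T) U m n V | U m n V. openin BT U \<and> openin BT V \<and> m \<in> P \<and> n \<in> P}"

lemma B1_G1: "\<Union>B1 = G1"
proof (intro equalityI subsetI)
  fix g assume "g \<in> \<Union>B1"
  then obtain U m n V where "g \<in> groupoid_basic_set Q D T U m n V" "openin X U" "openin X V" "m \<in> P" "n \<in> P"
    unfolding B1_def by blast
  then show "g \<in> G1" unfolding groupoid_basic_set_def action_groupoid_def
    using openin_subset by fastforce
next
  fix g assume "g \<in> G1"
  then obtain x q y m n where g: "g = (x,q,y)" "x \<in> topspace X" "y \<in> topspace X" "m \<in> P" "n \<in> P"
    "q = m \<otimes>\<^bsub>Q\<^esub> inv\<^bsub>Q\<^esub> n" "(x, m) \<in> D" "(y, n) \<in> D" "T x m = T y n"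
    unfolding action_groupoid_def by blast
  then have "g \<in> groupoid_basic_set Q D T (topspace X) m n (topspace X)"
    unfolding groupoid_basic_set_def by blast
  moreover have "groupoid_basic_set Q D T (topspace X) m n (topspace X) \<in> B1"
    unfolding B1_def using g by blast
  ultimately show "g \<in> \<Union>B1" by blast
qed

lemma B2_img: "B2 = (\<lambda>U. Phi ` U) ` B1"
proof (intro equalityI subsetI)
  fix Z assume "Z \<in> B2"
  then obtain U' m n V' where Z: "Z = groupoid_basic_set Q BD (path_shift Q D T) U' m n V'"
    "openin BT U'" "openin BT V'" "m \<in> P" "n \<in> P"
    unfolding B2_def by blast
  define U where "U = {x \<in> topspace X. J x \<in> U'}"
  define V where "V = {x \<in> topspace X. J x \<in> V'}"
  have oU: "openin X U" "openin X V"
    unfolding U_def V_def using openin_continuous_map_preimage[OF J_cont] Z by auto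
  have "U' \<subseteq> BP" "V' \<subseteq> BP" using Z openin_subset topBT by auto
  have "U' = J ` U"
  proof (intro equalityI subsetI)
    fix A assume "A \<in> U'"
    then obtain x where "x \<in> topspace X" "A = J x" using \<open>U' \<subseteq> BP\<close> J_image by blast
    then show "A \<in> J ` U" using \<open>A \<in> U'\<close> unfolding U_def by blast
  qed (auto simp: U_def)
  have "V' = J ` V"
  proof (intro equalityI subsetI)
    fix A assume "A \<in> V'"
    then obtain x where "x \<in> topspace X" "A = J x" using \<open>V' \<subseteq> BP\<close> J_image by blast
    then show "A \<in> J ` V" using \<open>A \<in> V'\<close> unfolding V_def by blast
  qed (auto simp: V_def)
  then have "Z = Phi ` groupoid_basic_set Q D T U m n V"
    using Z Z_img[of U V] \<open>U' = J ` U\<close> \<open>V' = J ` V\<close> unfolding U_def V_def by auto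
  moreover have "groupoid_basic_set Q D T U m n V \<in> B1" unfolding B1_def using oU Z by blast
  ultimately show "Z \<in> (\<lambda>U. Phi ` U) ` B1" by blast
next
  fix Z assume "Z \<in> (\<lambda>U. Phi ` U) ` B1"
  then obtain U m n V where Z: "Z = Phi ` groupoid_basic_set Q D T U m n V"
    "openin X U" "openin X V" "m \<in> P" "n \<in> P"
    unfolding B1_def by blast
  have sub: "U \<subseteq> topspace X" "V \<subseteq> topspace X" using Z openin_subset by auto
  have "openin BT (J ` U)" "openin BT (J ` V)"
    using homeomorphic_map_openness[OF J_homeo] sub Z by auto
  moreover have "Z = groupoid_basic_set Q BD (path_shift Q D T) (J ` U) m n (J ` V)"
    using Z Z_img[OF sub] by simp
  ultimately show "Z \<in> B2" unfolding B2_def using Z by blast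
qed

lemma gt1: "groupoid_topology Q P X D T = topology_generated_by B1"
  unfolding groupoid_topology_def B1_def by simp
lemma gt2: "groupoid_topology Q P BT BD (path_shift Q D T) = topology_generated_by B2"
  unfolding groupoid_topology_def B2_def by simp

lemma B2_G2: "\<Union>B2 = G2"
proof -
  have "\<Union>B2 = Phi ` \<Union>B1" unfolding B2_img by (simp add: image_Union)
  then show ?thesis using B1_G1 Phi_img by simp
qed

lemma Phi_homeo: "homeomorphic_map (subtopology (groupoid_topology Q P X D T) G1)
   (subtopology (groupoid_topology Q P BT BD (path_shift Q D T)) G2) Phi"
proof -
  have "subtopology (groupoid_topology Q P X D T) G1 = topology_generated_by B1"
    unfolding gt1 by (metis B1_G1 subtopology_topspace topology_generated_by_topspace)
  moreover have "subtopology (groupoid_topology Q P BT BD (path_shift Q D T)) G2 = topology_generated_by B2"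
    unfolding gt2 by (metis B2_G2 subtopology_topspace topology_generated_by_topspace)
  moreover have "homeomorphic_map (topology_generated_by B1) (topology_generated_by B2) Phi"
    using homeo_generated B1_G1 Phi_inj B2_img by metis
  ultimately show ?thesis by simp
qed

lemma main: "\<exists>J. homeomorphic_map X (boundary_topology P X D Q T) J \<and>
           (\<forall>(x, m)\<in>D. path_shift Q D T (J x) m \<noteq> {} \<and>
                        J (T x m) = path_shift Q D T (J x) m) \<and>
           groupoid_iso Q
             (action_groupoid Q P (topspace X) D T) (groupoid_topology Q P X D T)
             (action_groupoid Q P (boundary_path_space Q P X D T) (boundary_dom Q P X D T)
                (path_shift Q D T))
             (groupoid_topology Q P (boundary_topology P X D Q T) (boundary_dom Q P X D T)
                (path_shift Q D T))
             (\<lambda>(x, q, y). (J x, q, J y))"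
proof (intro exI[of _ J] conjI)
  show "homeomorphic_map X BT J" by (rule J_homeo)
  show "\<forall>(x, m)\<in>D. path_shift Q D T (J x) m \<noteq> {} \<and> J (T x m) = path_shift Q D T (J x) m"
    using shift_J J_ne Tin by fastforce
  have "groupoid_iso Q G1 (groupoid_topology Q P X D T) G2
     (groupoid_topology Q P BT BD (path_shift Q D T)) Phi"
    unfolding groupoid_iso_def
  proof (intro conjI ballI impI)
    show "bij_betw Phi G1 G2" using Phi_inj Phi_img by (simp add: bij_betw_def)
    show "homeomorphic_map (subtopology (groupoid_topology Q P X D T) G1)
      (subtopology (groupoid_topology Q P BT BD (path_shift Q D T)) G2) Phi" by (rule Phi_homeo)
    fix g h show "Phi (gpd_mult Q g h) = gpd_mult Q (Phi g) (Phi h)"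
      unfolding Phi_def gpd_mult_def by (cases g, cases h) auto
  next
    fix g show "Phi (gpd_inv Q g) = gpd_inv Q (Phi g)"
      unfolding Phi_def gpd_inv_def by (cases g) auto
  qed
  then show "groupoid_iso Q G1 (groupoid_topology Q P X D T) G2
     (groupoid_topology Q P BT BD (path_shift Q D T)) (\<lambda>(x, q, y). (J x, q, J y))"
    unfolding Phi_def .
qed

end

theorem proposition6p20:
  fixes Q :: "('q, 'b) monoid_scheme" and P :: "'q set"
    and X :: "'x topology" and D :: "('x \<times> 'q) set" and T :: "'x \<Rightarrow> 'q \<Rightarrow> 'x"
  assumes "quasi_lattice_ordered Q P"
    and "locally_compact_action Q P X D T"
    and "directed_action Q P D"
  shows "\<exists>J. homeomorphic_map X (boundary_topology P X D Q T) J \<and>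
           (\<forall>(x, m)\<in>D. path_shift Q D T (J x) m \<noteq> {} \<and>
                        J (T x m) = path_shift Q D T (J x) m) \<and>
           groupoid_iso Q
             (action_groupoid Q P (topspace X) D T) (groupoid_topology Q P X D T)
             (action_groupoid Q P (boundary_path_space Q P X D T) (boundary_dom Q P X D T)
                (path_shift Q D T))
             (groupoid_topology Q P (boundary_topology P X D Q T) (boundary_dom Q P X D T)
                (path_shift Q D T))
             (\<lambda>(x, q, y). (J x, q, J y))"
proof -
  interpret pg Q P X D T using assms by unfold_locales
  show ?thesis by (rule main)
qed

end
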